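(* Assume that for every $k>0$ there exists a $k$-ineffable$'$ cardinal. Let $k,p>0$ and let $U$ be a function assignment for $\mathbb{N}^k$ with the ordinal completion property. Then there exist a finite $A\subseteq\mathbb{N}^k$ and $E\subseteq\mathbb{N}$ with $|E|=p$ and $E^k\subseteq A$ such that $U(A)$ has at most $\mathrm{ot}(k)$ regressive values on $E^k$.
   Context: A function assignment for $\mathbb{N}^k$ assigns to each finite $A\subseteq\mathbb{N}^k$ a function $U(A):A\to A$. For a tuple $x$, $\min(x)$, $|x|$ are least and greatest coordinates; $y$ is a regressive value of $F$ on $B$ iff $y=F(x)$ for some $x\in B$ with $|y|<\min(x)$. $\mathrm{ot}(k)$ is the number of order types of elements of $\mathbb{N}^k$ ($x,y$ same order type iff $x_i<x_j\Leftrightarrow y_i<y_j$ for all $i,j$). $\mathrm{fld}(G)$ is the set of coordinates of tuples in $G$. For $g$ with finite domain $C\subseteq Y^k$ and values in $Y^k$ ($Y$ linearly ordered) and $h$ with finite domain in $\mathbb{N}^k$ and values in $\mathbb{N}^k$, $g$ is order isomorphic to $h$ iff some order-preserving bijection from $\mathrm{fld}(\mathrm{graph}\,g)$ onto $\mathrm{fld}(\mathrm{graph}\,h)$, applied coordinatewise, maps $\mathrm{graph}\,g$ onto $\mathrm{graph}\,h$. $f$ is a completion of $U$ on $Y$ iff $f:Y^k\to Y^k$ and for every finite $B\subseteq Y^k$ there are finite $C$ with $B\subseteq C\subseteq Y^k$ and finite $A\subseteq\mathbb{N}^k$ with $f|C$ order isomorphic to $U(A)$. $U$ has the ordinal completion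 property iff it has a completion on every well-ordered set. $S_k(X)$ is the set of $k$-element subsets of $X$; $f:S_k(\lambda)\to\lambda$ is regressive iff $f(A)<\min(A)$ or $\min(A)=0$; $\lambda$ is $k$-ineffable$'$ iff it is an infinite cardinal and every regressive $f:S_k(\lambda)\to\lambda$ is constant on $S_k(A)$ for some stationary $A\subseteq\lambda$. *)

theory Defs
  imports Main
begin

definition tuples :: "'a set \<Rightarrow> nat \<Rightarrow> 'a list set" where
  "tuples X k = {x. length x = k \<and> set x \<subseteq> X}"

definition function_assignment :: "nat \<Rightarrow> (nat list set \<Rightarrow> nat list \<Rightarrow> nat list) \<Rightarrow> bool" where
  "function_assignment k U \<longleftrightarrow>
     (\<forall>A. finite A \<and> A \<subseteq> tuples UNIV k \<longrightarrow> (\<forall>x\<in>A. U A x \<in> A))"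

definition regvals :: "(nat list \<Rightarrow> nat list) \<Rightarrow> nat list set \<Rightarrow> nat list set" where
  "regvals F B = {y. \<exists>x\<in>B. y = F x \<and> Max (set y) < Min (set x)}"

(* order type of a k-tuple, represented by its strict order pattern *)
definition order_pattern :: "nat \<Rightarrow> nat list \<Rightarrow> (nat \<times> nat) set" where
  "order_pattern k x = {(i, j). i < k \<and> j < k \<and> x ! i < x ! j}"

definition ot :: "nat \<Rightarrow> nat" where
  "ot k = card (order_pattern k ` tuples (UNIV :: nat set) k)"

definition graph_on :: "'a list set \<Rightarrow> ('a list \<Rightarrow> 'a list) \<Rightarrow> ('a list \<times> 'a list) set" where
  "graph_on C g = {(x, g x) | x. x \<in> C}"

definition fld :: "('a list \<times> 'a list) set \<Rightarrow> 'a set" where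
  "fld G = (\<Union>(x, y)\<in>G. set x \<union> set y)"

definition order_iso :: "'a rel \<Rightarrow> 'a list set \<Rightarrow> ('a list \<Rightarrow> 'a list)
                          \<Rightarrow> nat list set \<Rightarrow> (nat list \<Rightarrow> nat list) \<Rightarrow> bool" where
  "order_iso r C g A h \<longleftrightarrow>
     (\<exists>\<phi>. bij_betw \<phi> (fld (graph_on C g)) (fld (graph_on A h)) \<and>
          (\<forall>a\<in>fld (graph_on C g). \<forall>b\<in>fld (graph_on C g).
              ((a, b) \<in> r \<and> a \<noteq> b) \<longleftrightarrow> \<phi> a < \<phi> b) \<and>
          (\<lambda>(x, y). (map \<phi> x, map \<phi> y)) ` graph_on C g = graph_on A h)"

definition completion :: "nat \<Rightarrow> (nat list set \<Rightarrow> nat list \<Rightarrow> nat list) \<Rightarrow> 'a set \<Rightarrow> 'a rel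
                           \<Rightarrow> ('a list \<Rightarrow> 'a list) \<Rightarrow> bool" where
  "completion k U Y r f \<longleftrightarrow>
     (\<forall>x\<in>tuples Y k. f x \<in> tuples Y k) \<and>
     (\<forall>B. finite B \<and> B \<subseteq> tuples Y k \<longrightarrow>
        (\<exists>C A. finite C \<and> B \<subseteq> C \<and> C \<subseteq> tuples Y k \<and>
               finite A \<and> A \<subseteq> tuples UNIV k \<and> order_iso r C f A (U A)))"

(* ordinal completion property, relativised to well-orders on subsets of the type 'a *)
definition ordinal_completion_property :: "'a itself \<Rightarrow> nat \<Rightarrow> (nat list set \<Rightarrow> nat list \<Rightarrow> nat list) \<Rightarrow> bool" where
  "ordinal_completion_property _ k U \<longleftrightarrow>
     (\<forall>r :: 'a rel. Well_order r \<longrightarrow> (\<exists>f. completion k U (Field r) r f))"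

definition rmin :: "'a rel \<Rightarrow> 'a set \<Rightarrow> 'a" where
  "rmin r A = (THE a. a \<in> A \<and> (\<forall>b\<in>A. (a, b) \<in> r))"

definition rless :: "'a rel \<Rightarrow> 'a \<Rightarrow> 'a \<Rightarrow> bool" where
  "rless r a b \<longleftrightarrow> (a, b) \<in> r \<and> a \<noteq> b"

definition club :: "'a rel \<Rightarrow> 'a set \<Rightarrow> bool" where
  "club r C \<longleftrightarrow> C \<subseteq> Field r \<and>
     (\<forall>\<alpha>\<in>Field r. \<exists>\<beta>\<in>C. rless r \<alpha> \<beta>) \<and>
     (\<forall>\<gamma>\<in>Field r. ((\<exists>\<beta>\<in>C. rless r \<beta> \<gamma>) \<and>
                     (\<forall>\<alpha>. rless r \<alpha> \<gamma> \<longrightarrow> (\<exists>\<beta>\<in>C. rless r \<alpha> \<beta> \<and> rless r \<beta> \<gamma>)))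
                   \<longrightarrow> \<gamma> \<in> C)"

definition stationary :: "'a rel \<Rightarrow> 'a set \<Rightarrow> bool" where
  "stationary r S \<longleftrightarrow> S \<subseteq> Field r \<and> (\<forall>C. club r C \<longrightarrow> S \<inter> C \<noteq> {})"

definition Sk :: "nat \<Rightarrow> 'a set \<Rightarrow> 'a set set" where
  "Sk k X = {A. A \<subseteq> X \<and> finite A \<and> card A = k}"

definition regressive :: "nat \<Rightarrow> 'a rel \<Rightarrow> ('a set \<Rightarrow> 'a) \<Rightarrow> bool" where
  "regressive k r f \<longleftrightarrow>
     (\<forall>A\<in>Sk k (Field r). f A \<in> Field r \<and>
        (rless r (f A) (rmin r A) \<or> rmin r A = rmin r (Field r)))"

definition ineffable' :: "nat \<Rightarrow> 'a rel \<Rightarrow> bool" where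
  "ineffable' k r \<longleftrightarrow> card_order_on (Field r) r \<and> infinite (Field r) \<and>
     (\<forall>f. regressive k r f \<longrightarrow>
        (\<exists>S. stationary r S \<and> (\<exists>c. \<forall>A\<in>Sk k S. f A = c)))"

end

theory Submission
  imports Defs "HOL-Library.Ramsey" "HOL-Library.Infinite_Set"
begin


lemma wo_facts:
  assumes "Well_order r"
  shows "trans r" "antisym r" "\<And>a b. a \<in> Field r \<Longrightarrow> b \<in> Field r \<Longrightarrow> (a,b) \<in> r \<or> (b,a) \<in> r"
    "\<And>a. a \<in> Field r \<Longrightarrow> (a,a) \<in> r"
  using assms unfolding well_order_on_def linear_order_on_def partial_order_on_def preorder_on_def
    total_on_def refl_on_def by metis+

lemma rless_trans:
  assumes "Well_order r" "rless r a b" "rless r b c" shows "rless r a c"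
  using assms wo_facts[OF assms(1)] unfolding rless_def trans_def antisym_def by blast

lemma rless_le_trans:
  assumes "Well_order r" "rless r a b" "(b,c) \<in> r" shows "rless r a c"
  using assms wo_facts[OF assms(1)] unfolding rless_def trans_def antisym_def by blast

lemma le_rless_trans:
  assumes "Well_order r" "(a,b) \<in> r" "rless r b c" shows "rless r a c"
  using assms wo_facts[OF assms(1)] unfolding rless_def trans_def antisym_def by blast

lemma rless_asym:
  assumes "Well_order r" "rless r a b" shows "\<not> rless r b a"
  using assms wo_facts[OF assms(1)] unfolding rless_def antisym_def by blast

lemma rless_Field: "rless r a b \<Longrightarrow> a \<in> Field r \<and> b \<in> Field r"
  unfolding rless_def by (auto intro: FieldI1 FieldI2)

lemma rmin_props:
  assumes "Well_order r" "X \<subseteq> Field r" "X \<noteq> {}"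
  shows "rmin r X \<in> X" "\<And>b. b \<in> X \<Longrightarrow> (rmin r X, b) \<in> r"
proof -
  have wo: "wo_rel r" using assms(1) by (simp add: wo_rel_def)
  have eq: "rmin r X = wo_rel.minim r X"
    unfolding rmin_def wo_rel.minim_def[OF wo] wo_rel.isMinim_def[OF wo] by simp
  have "wo_rel.isMinim r X (wo_rel.minim r X)" using wo_rel.minim_isMinim[OF wo assms(2,3)] .
  then show "rmin r X \<in> X" "\<And>b. b \<in> X \<Longrightarrow> (rmin r X, b) \<in> r"
    unfolding eq wo_rel.isMinim_def[OF wo] by auto
qed

definition smono :: "'a rel \<Rightarrow> (nat \<Rightarrow> 'a) \<Rightarrow> bool" where
  "smono r s \<longleftrightarrow> (\<forall>i j. i < j \<longrightarrow> rless r (s i) (s j))"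

lemma smono_iff:
  assumes "Well_order r" "smono r s" shows "rless r (s i) (s j) \<longleftrightarrow> i < j"
proof
  assume h: "rless r (s i) (s j)"
  show "i < j"
  proof (rule ccontr)
    assume "\<not> i < j"
    then have "j = i \<or> j < i" by auto
    then show False
    proof
      assume "j = i" then show False using h unfolding rless_def by simp
    next
      assume "j < i" then have "rless r (s j) (s i)" using assms(2) unfolding smono_def by blast
      then show False using rless_asym[OF assms(1) h] by simp
    qed
  qed
qed (use assms in \<open>auto simp: smono_def\<close>)

lemma smono_inj: assumes "Well_order r" "smono r s" shows "inj s"
proof (rule injI)
  fix i j assume "s i = s j"
  then have "\<not> rless r (s i) (s j)" "\<not> rless r (s j) (s i)" unfolding rless_def by auto
  then show "i = j" using smono_iff[OF assms] by (meson linorder_neqE_nat)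
qed

lemma smono_Field: assumes "smono r s" shows "s i \<in> Field r"
  using assms unfolding smono_def by (meson less_Suc_eq rless_Field)

definition nthr :: "'a rel \<Rightarrow> 'a set \<Rightarrow> nat \<Rightarrow> 'a" where
  "nthr r A j = (THE a. a \<in> A \<and> card {b\<in>A. rless r b a} = j)"

lemma card_less_mono:
  assumes "finite B" "w \<in> B" "v \<in> B" "w < v"
  shows "card {u\<in>B. u < w} < card {u\<in>B. u < (v::nat)}"
  by (rule psubset_card_mono) (use assms in auto)

lemma card_less_inj:
  assumes "finite B" "w \<in> B" "v \<in> B" "card {u\<in>B. u < w} = card {u\<in>B. u < (v::nat)}"
  shows "w = v"
  using card_less_mono[OF assms(1,2,3)] card_less_mono[OF assms(1,3,2)] assms(4)
  by (metis less_irrefl linorder_neqE_nat)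

lemma nthr_image:
  assumes wo: "Well_order r" and sm: "smono r s" and fin: "finite B" and v: "v \<in> B"
  shows "nthr r (s ` B) (card {u\<in>B. u < v}) = s v"
proof -
  have inj: "inj s" using smono_inj[OF wo sm] .
  have cnt: "card {b\<in>s ` B. rless r b (s w)} = card {u\<in>B. u < w}" for w
  proof -
    have "{b\<in>s ` B. rless r b (s w)} = s ` {u\<in>B. u < w}"
      using smono_iff[OF wo sm] by auto
    then show ?thesis using inj by (simp add: card_image inj_on_subset)
  qed
  show ?thesis unfolding nthr_def
  proof (rule the_equality)
    show "s v \<in> s ` B \<and> card {b \<in> s ` B. rless r b (s v)} = card {u \<in> B. u < v}"
      using v cnt by auto
  next
    fix a assume "a \<in> s ` B \<and> card {b \<in> s ` B. rless r b a} = card {u \<in> B. u < v}"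
    then obtain w where w: "w \<in> B" "a = s w" "card {u\<in>B. u < w} = card {u\<in>B. u < v}"
      using cnt by auto
    then show "a = s v" using card_less_inj[OF fin w(1) v w(3)] by simp
  qed
qed

lemma tail_club:
  assumes co: "card_order_on (Field r) r" and inf: "infinite (Field r)" and a: "a \<in> Field r"
  shows "club r {x\<in>Field r. rless r a x}"
proof -
  have wo: "Well_order r" using co by (simp add: card_order_on_well_order_on)
  have lim: "\<exists>b \<in> Field r. rless r c b" if "c \<in> Field r" for c
    using infinite_Card_order_limit[OF co inf that] unfolding rless_def by blast
  show ?thesis unfolding club_def
  proof (intro conjI ballI)
    show "{x \<in> Field r. rless r a x} \<subseteq> Field r" by auto
  next
    fix \<alpha> assume al: "\<alpha> \<in> Field r"
    have "(a,\<alpha>) \<in> r \<or> (\<alpha>,a) \<in> r" using wo_facts(3)[OF wo a al] .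
    then show "\<exists>\<beta>\<in>{x \<in> Field r. rless r a x}. rless r \<alpha> \<beta>"
    proof
      assume "(a,\<alpha>) \<in> r"
      obtain b where "b \<in> Field r" "rless r \<alpha> b" using lim[OF al] by blast
      then show ?thesis using le_rless_trans[OF wo \<open>(a,\<alpha>) \<in> r\<close>] by blast
    next
      assume "(\<alpha>,a) \<in> r"
      obtain b where "b \<in> Field r" "rless r a b" using lim[OF a] by blast
      then show ?thesis using le_rless_trans[OF wo \<open>(\<alpha>,a) \<in> r\<close>] by blast
    qed
  next
    fix \<gamma> assume "\<gamma> \<in> Field r"
    show "(\<exists>\<beta>\<in>{x \<in> Field r. rless r a x}. rless r \<beta> \<gamma>) \<and>
         (\<forall>\<alpha>. rless r \<alpha> \<gamma> \<longrightarrow> (\<exists>\<beta>\<in>{x \<in> Field r. rless r a x}. rless r \<alpha> \<beta> \<and> rless r \<beta> \<gamma>))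
         \<longrightarrow> \<gamma> \<in> {x \<in> Field r. rless r a x}"
      using rless_trans[OF wo] \<open>\<gamma> \<in> Field r\<close> by blast
  qed
qed

lemma stationary_above:
  assumes co: "card_order_on (Field r) r" and inf: "infinite (Field r)" and a: "a \<in> Field r"
    and st: "stationary r S"
  shows "\<exists>t\<in>S. rless r a t"
  using st tail_club[OF co inf a] unfolding stationary_def by blast

lemma stationary_seq:
  assumes co: "card_order_on (Field r) r" and inf: "infinite (Field r)"
    and st: "stationary r S"
  shows "\<exists>s. smono r s \<and> range s \<subseteq> S"
proof -
  have wo: "Well_order r" using co by (simp add: card_order_on_well_order_on)
  obtain a0 where a0: "a0 \<in> Field r" using inf by fastforce
  have SF: "S \<subseteq> Field r" using st unfolding stationary_def by auto
  define nx where "nx = (\<lambda>a. SOME t. t \<in> S \<and> rless r a t)"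
  have nx: "nx a \<in> S \<and> rless r a (nx a)" if "a \<in> Field r" for a
  proof -
    have "\<exists>t. t \<in> S \<and> rless r a t" using stationary_above[OF co inf that st] by blast
    then show ?thesis unfolding nx_def by (rule someI_ex)
  qed
  define s where "s = rec_nat (nx a0) (\<lambda>_ a. nx a)"
  have s0: "s 0 = nx a0" and sS: "s (Suc n) = nx (s n)" for n by (simp_all add: s_def)
  have inS: "s n \<in> S" for n
    by (induction n) (use nx a0 SF in \<open>auto simp: s0 sS\<close>)
  have step: "rless r (s n) (s (Suc n))" for n
    using nx[of "s n"] inS SF by (auto simp: sS)
  have "rless r (s i) (s j)" if "i < j" for i j
    using that
  proof (induction j)
    case 0 then show ?case by simp
  next
    case (Suc j)
    show ?case
    proof (cases "i = j")
      case True then show ?thesis using step by simp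
    next
      case False then have "i < j" using Suc by simp
      then show ?thesis using Suc.IH step rless_trans[OF wo] by blast
    qed
  qed
  then show ?thesis using inS unfolding smono_def by blast
qed

definition gfun :: "nat \<Rightarrow> 'a rel \<Rightarrow> ('a list \<Rightarrow> 'a list) \<Rightarrow> nat list \<times> nat \<Rightarrow> 'a set \<Rightarrow> 'a" where
  "gfun k r f m A = (let x = map (nthr r A) (fst m) in
     if x \<in> tuples (Field r) k \<and> (\<forall>b\<in>set (f x). \<forall>a\<in>A. rless r b a) then f x ! snd m
     else rmin r (Field r))"

definition chi :: "nat \<Rightarrow> 'a rel \<Rightarrow> ('a list \<Rightarrow> 'a list) \<Rightarrow> nat list \<times> nat \<Rightarrow> 'a set \<Rightarrow> bool" where
  "chi k r f m A \<longleftrightarrow> (\<forall>B B'. B \<subseteq> A \<longrightarrow> B' \<subseteq> A \<longrightarrow> card B = k \<longrightarrow> card B' = k \<longrightarrow>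
      gfun k r f m B = gfun k r f m B')"

definition Mset :: "nat \<Rightarrow> (nat list \<times> nat) set" where
  "Mset k = tuples {0..<k} k \<times> {0..<k}"

definition Hfun :: "nat \<Rightarrow> 'a rel \<Rightarrow> ('a list \<Rightarrow> 'a list) \<Rightarrow> 'a set \<Rightarrow> 'a" where
  "Hfun k r f A = (if \<exists>m\<in>Mset k. \<not> chi k r f m A
      then gfun k r f (SOME m. m \<in> Mset k \<and> \<not> chi k r f m A) A else rmin r (Field r))"

lemma finite_Mset: "finite (Mset k)"
proof -
  have "tuples {0..<k} k = {xs. set xs \<subseteq> {0..<k} \<and> length xs = k}" unfolding tuples_def by auto
  then have "finite (tuples {0..<k} k)" using finite_lists_length_eq[of "{0..<k}" k] by simp
  then show ?thesis unfolding Mset_def by simp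
qed

lemma gfun_props:
  assumes wo: "Well_order r" and ft: "\<forall>x\<in>tuples (Field r) k. f x \<in> tuples (Field r) k"
    and AF: "A \<subseteq> Field r" "A \<noteq> {}" and i: "snd m < k"
  shows "gfun k r f m A \<in> Field r \<and>
         (rless r (gfun k r f m A) (rmin r A) \<or> gfun k r f m A = rmin r (Field r))"
proof -
  have FN: "Field r \<noteq> {}" using AF by auto
  have fm: "rmin r (Field r) \<in> Field r" using rmin_props[OF wo _ FN] by simp
  define x where "x = map (nthr r A) (fst m)"
  show ?thesis
  proof (cases "x \<in> tuples (Field r) k \<and> (\<forall>b\<in>set (f x). \<forall>a\<in>A. rless r b a)")
    case True
    then have g: "gfun k r f m A = f x ! snd m" unfolding gfun_def x_def Let_def by simp
    have fx: "f x \<in> tuples (Field r) k" using ft True by blast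
    then have "f x ! snd m \<in> set (f x)" using i unfolding tuples_def by auto
    moreover have "rmin r A \<in> A" using rmin_props[OF wo AF] by simp
    ultimately show ?thesis using True fx g unfolding tuples_def by auto
  next
    case False
    then have g: "gfun k r f m A = rmin r (Field r)" unfolding gfun_def x_def Let_def by auto
    then show ?thesis using fm by simp
  qed
qed

lemma Hfun_regressive:
  assumes wo: "Well_order r" and ft: "\<forall>x\<in>tuples (Field r) k. f x \<in> tuples (Field r) k"
    and L: "L > 0"
  shows "regressive L r (Hfun k r f)"
  unfolding regressive_def
proof
  fix A assume A: "A \<in> Sk L (Field r)"
  then have AF: "A \<subseteq> Field r" "A \<noteq> {}" using L unfolding Sk_def by auto
  have FN: "Field r \<noteq> {}" using AF by auto
  have fm: "rmin r (Field r) \<in> Field r" using rmin_props[OF wo _ FN] by simp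
  have ra: "rmin r A \<in> Field r" using rmin_props[OF wo AF] AF by auto
  have fmle: "(rmin r (Field r), rmin r A) \<in> r" using rmin_props(2)[OF wo _ FN] ra by simp
  have main: "Hfun k r f A \<in> Field r \<and>
         (rless r (Hfun k r f A) (rmin r A) \<or> Hfun k r f A = rmin r (Field r))"
  proof (cases "\<exists>m\<in>Mset k. \<not> chi k r f m A")
    case True
    define m where "m = (SOME m. m \<in> Mset k \<and> \<not> chi k r f m A)"
    have "m \<in> Mset k" using True someI_ex[of "\<lambda>m. m \<in> Mset k \<and> \<not> chi k r f m A"]
      unfolding m_def by blast
    then have "snd m < k" unfolding Mset_def by auto
    then show ?thesis using gfun_props[OF wo ft AF] True unfolding Hfun_def m_def by simp
  next
    case False then show ?thesis using fm unfolding Hfun_def by simp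
  qed
  show "Hfun k r f A \<in> Field r \<and>
         (rless r (Hfun k r f A) (rmin r A) \<or> rmin r A = rmin r (Field r))"
    using main fmle unfolding rless_def by auto
qed

lemma ramsey_seq:
  assumes wo: "Well_order r" and sm: "smono r s" and rs: "range s \<subseteq> S"
    and V: "finite V" and FV: "\<forall>A. F A \<in> V"
  shows "\<exists>s2. smono r s2 \<and> range s2 \<subseteq> S \<and>
     (\<forall>X X'. finite X \<longrightarrow> card X = L \<longrightarrow> finite X' \<longrightarrow> card X' = L \<longrightarrow> F (s2 ` X) = F (s2 ` X'))"
proof -
  obtain h where h: "bij_betw h V {0..<card V}" using ex_bij_betw_finite_nat[OF V] by blast
  have bnd: "\<forall>X. X \<subseteq> (UNIV::nat set) \<and> finite X \<and> card X = L \<longrightarrow> h (F (s ` X)) < card V"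
    using h FV unfolding bij_betw_def by auto
  obtain Y t where Y: "infinite Y" "\<forall>X. X \<subseteq> Y \<and> finite X \<and> card X = L \<longrightarrow> h (F (s ` X)) = t"
    using Ramsey[OF infinite_UNIV_nat bnd] by blast
  define s2 where "s2 = s \<circ> enumerate Y"
  have se: "strict_mono (enumerate Y)" using strict_mono_enumerate[OF Y(1)] .
  have "smono r s2" using sm se unfolding smono_def s2_def strict_mono_def by auto
  moreover have "range s2 \<subseteq> S" using rs unfolding s2_def by auto
  moreover
  have key: "h (F (s2 ` X)) = t" if "finite X" "card X = L" for X
  proof -
    have "inj (enumerate Y)" using se strict_mono_imp_inj_on by blast
    then have "card (enumerate Y ` X) = L" using that by (simp add: card_image inj_on_subset)
    moreover have "enumerate Y ` X \<subseteq> Y" using enumerate_in_set[OF Y(1)] by auto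
    ultimately have "h (F (s ` (enumerate Y ` X))) = t" using Y(2) that by blast
    then show ?thesis unfolding s2_def by (simp add: image_comp)
  qed
  have "F (s2 ` X) = F (s2 ` X')" if "finite X" "card X = L" "finite X'" "card X' = L" for X X'
  proof -
    have "h (F (s2 ` X)) = h (F (s2 ` X'))" using key that by simp
    then show ?thesis using h FV unfolding bij_betw_def inj_on_def by blast
  qed
  ultimately show ?thesis by blast
qed
lemma extend_above:
  assumes "finite (F::nat set)" "card F \<le> n"
  shows "\<exists>X. F \<subseteq> X \<and> finite X \<and> card X = n \<and> (\<forall>x\<in>X-F. \<forall>y\<in>F. y < x)"
proof -
  define b where "b = Suc (Max (insert 0 F))"
  have bF: "\<forall>y\<in>F. y < b" unfolding b_def using assms(1) by (simp add: le_imp_less_Suc)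
  define G where "G = {b..<b + (n - card F)}"
  have dj: "F \<inter> G = {}" using bF unfolding G_def by fastforce
  have "card (F \<union> G) = n" using card_Un_disjoint[OF assms(1) _ dj] assms(2) unfolding G_def by simp
  moreover have "\<forall>x\<in>(F \<union> G)-F. \<forall>y\<in>F. y < x" using bF unfolding G_def by fastforce
  moreover have "finite (F \<union> G)" using assms(1) unfolding G_def by simp
  ultimately show ?thesis by (intro exI[of _ "F \<union> G"]) auto
qed
lemma rank_surj:
  assumes "finite (B::nat set)" "card B = k" "j < k"
  shows "\<exists>v\<in>B. card {u\<in>B. u < v} = j"
proof -
  let ?rk = "\<lambda>v. card {u\<in>B. u < v}"
  have inj: "inj_on ?rk B" using card_less_inj[OF assms(1)] unfolding inj_on_def by blast
  have sub: "?rk ` B \<subseteq> {0..<k}"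
  proof
    fix w assume "w \<in> ?rk ` B"
    then obtain v where v: "v \<in> B" "w = ?rk v" by blast
    have "{u\<in>B. u < v} \<subset> B" using v by auto
    then have "?rk v < card B" using assms(1) by (rule psubset_card_mono[rotated])
    then show "w \<in> {0..<k}" using v assms(2) by simp
  qed
  have "card (?rk ` B) = k" using card_image[OF inj] assms(2) by simp
  then have "?rk ` B = {0..<k}" using card_subset_eq[OF _ sub] by simp
  then have "j \<in> ?rk ` B" using assms(3) by simp
  then show ?thesis by blast
qed
lemma gfun_prefix:
  assumes wo: "Well_order r" and sm: "smono r s" and X: "finite X" and BX: "B \<subseteq> X"
    and cB: "card B = k" and k: "k > 0" and above: "\<forall>x\<in>X-B. \<forall>y\<in>B. y < x"
    and m: "m \<in> Mset k"
  shows "gfun k r f m (s ` X) = gfun k r f m (s ` B)"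
proof -
  have B: "finite B" using X BX finite_subset by blast
  have Bne: "B \<noteq> {}" using cB k by auto
  have nth_eq: "nthr r (s ` X) j = nthr r (s ` B) j" if jk: "j < k" for j
  proof -
    obtain v where v: "v \<in> B" "card {u\<in>B. u < v} = j" using rank_surj[OF B cB jk] by blast
    have "{u\<in>X. u < v} = {u\<in>B. u < v}"
    proof (intro set_eqI iffI)
      fix u assume u: "u \<in> {u\<in>X. u < v}"
      show "u \<in> {u\<in>B. u < v}"
      proof (rule ccontr)
        assume "u \<notin> {u\<in>B. u < v}"
        then have "u \<in> X - B" using u by auto
        then have "v < u" using above v(1) by blast
        then show False using u by simp
      qed
    qed (use BX in auto)
    then have "card {u\<in>X. u < v} = j" using v by simp
    moreover have "v \<in> X" using v(1) BX by blast
    ultimately have "nthr r (s ` X) j = s v" using nthr_image[OF wo sm X, of v] by simp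
    moreover have "nthr r (s ` B) j = s v" using nthr_image[OF wo sm B v(1)] v by simp
    ultimately show ?thesis by simp
  qed
  have "set (fst m) \<subseteq> {0..<k}" using m unfolding Mset_def tuples_def by auto
  then have xeq: "map (nthr r (s ` X)) (fst m) = map (nthr r (s ` B)) (fst m)"
    using nth_eq by (intro map_cong) auto
  have ceq: "(\<forall>a\<in>s ` X. rless r b a) \<longleftrightarrow> (\<forall>a\<in>s ` B. rless r b a)" for b
  proof
    assume "\<forall>a\<in>s ` B. rless r b a"
    show "\<forall>a\<in>s ` X. rless r b a"
    proof
      fix a assume "a \<in> s ` X"
      then obtain u where u: "u \<in> X" "a = s u" by blast
      show "rless r b a"
      proof (cases "u \<in> B")
        case True then show ?thesis using \<open>\<forall>a\<in>s ` B. rless r b a\<close> u by blast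
      next
        case False
        obtain y where y: "y \<in> B" using Bne by blast
        then have "y < u" using above u False by blast
        then have "rless r (s y) (s u)" using sm unfolding smono_def by blast
        moreover have "rless r b (s y)" using \<open>\<forall>a\<in>s ` B. rless r b a\<close> y by blast
        ultimately show ?thesis using rless_trans[OF wo] u by blast
      qed
    qed
  qed (use BX in blast)
  show ?thesis unfolding gfun_def Let_def xeq using ceq by simp
qed

lemma subset_image_k:
  assumes inj: "inj s" and B1: "B1 \<subseteq> s ` X" and X: "finite X" and c: "card B1 = k"
  shows "\<exists>Bn. Bn \<subseteq> X \<and> finite Bn \<and> card Bn = k \<and> B1 = s ` Bn"
proof -
  define Bn where "Bn = X \<inter> s -` B1"
  have e: "s ` Bn = B1" using B1 unfolding Bn_def by auto
  have f: "finite Bn" using X unfolding Bn_def by simp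
  have "card Bn = k" using c e card_image[OF inj_on_subset[OF inj, of Bn]] by simp
  then show ?thesis using e f unfolding Bn_def by blast
qed

lemma homog:
  assumes wo: "Well_order r" and k: "k > 0" and sm: "smono r s2"
    and Hc: "\<forall>X. finite X \<longrightarrow> card X = 2*k \<longrightarrow> Hfun k r f (s2 ` X) = c"
    and col: "\<forall>X X'. finite X \<longrightarrow> card X = 2*k \<longrightarrow> finite X' \<longrightarrow> card X' = 2*k \<longrightarrow>
       {m\<in>Mset k. \<not> chi k r f m (s2 ` X)} = {m\<in>Mset k. \<not> chi k r f m (s2 ` X')}"
    and m: "m \<in> Mset k"
    and B: "finite B" "card B = k" and B': "finite B'" "card B' = k"
  shows "gfun k r f m (s2 ` B) = gfun k r f m (s2 ` B')"
proof -
  have inj: "inj s2" using smono_inj[OF wo sm] .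
  define X0 where "X0 = {0..<2*k}"
  have X0: "finite X0" "card X0 = 2*k" unfolding X0_def by auto
  define t0 where "t0 = {m\<in>Mset k. \<not> chi k r f m (s2 ` X0)}"
  have colX: "{m\<in>Mset k. \<not> chi k r f m (s2 ` X)} = t0" if "finite X" "card X = 2*k" for X
    using col that X0 unfolding t0_def by blast
  show ?thesis
  proof (cases "t0 = {}")
    case True
    have "card (B \<union> B') \<le> 2*k" using card_Un_le[of B B'] B B' by simp
    then obtain X where X: "B \<union> B' \<subseteq> X" "finite X" "card X = 2*k"
      using extend_above[of "B \<union> B'" "2*k"] B B' by blast
    have "chi k r f m (s2 ` X)" using colX[OF X(2,3)] True m by blast
    moreover have "s2 ` B \<subseteq> s2 ` X" "s2 ` B' \<subseteq> s2 ` X" using X(1) by auto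
    moreover have "card (s2 ` B) = k" "card (s2 ` B') = k"
      using B B' card_image[OF inj_on_subset[OF inj]] by auto
    ultimately show ?thesis unfolding chi_def by blast
  next
    case False
    define m0 where "m0 = (SOME m. m \<in> t0)"
    have m0: "m0 \<in> t0" using False some_in_eq unfolding m0_def by blast
    then have m0M: "m0 \<in> Mset k" unfolding t0_def by blast
    have gX: "gfun k r f m0 (s2 ` X) = c" if X: "finite X" "card X = 2*k" for X
    proof -
      have ce: "{m\<in>Mset k. \<not> chi k r f m (s2 ` X)} = t0" using colX[OF X] .
      have ex: "\<exists>m\<in>Mset k. \<not> chi k r f m (s2 ` X)" using ce False by blast
      have pe: "(\<lambda>m. m \<in> Mset k \<and> \<not> chi k r f m (s2 ` X)) = (\<lambda>m. m \<in> t0)"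
      proof
        fix m show "(m \<in> Mset k \<and> \<not> chi k r f m (s2 ` X)) = (m \<in> t0)"
          using ce by blast
      qed
      have "Hfun k r f (s2 ` X) = gfun k r f m0 (s2 ` X)"
        unfolding Hfun_def m0_def using ex pe by simp
      then show ?thesis using Hc X by simp
    qed
    have gB: "gfun k r f m0 (s2 ` Bn) = c" if Bn: "finite Bn" "card Bn = k" for Bn
    proof -
      obtain X where X: "Bn \<subseteq> X" "finite X" "card X = 2*k" "\<forall>x\<in>X-Bn. \<forall>y\<in>Bn. y < x"
        using extend_above[of Bn "2*k"] Bn by auto
      have "gfun k r f m0 (s2 ` X) = gfun k r f m0 (s2 ` Bn)"
        using gfun_prefix[OF wo sm X(2) X(1) Bn(2) k X(4) m0M] .
      then show ?thesis using gX[OF X(2,3)] by simp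
    qed
    have "chi k r f m0 (s2 ` X0)" unfolding chi_def
    proof (intro allI impI)
      fix B1 B2 assume h: "B1 \<subseteq> s2 ` X0" "B2 \<subseteq> s2 ` X0" "card B1 = k" "card B2 = k"
      obtain Bn1 where "finite Bn1" "card Bn1 = k" "B1 = s2 ` Bn1"
        using subset_image_k[OF inj h(1) X0(1) h(3)] by blast
      moreover obtain Bn2 where "finite Bn2" "card Bn2 = k" "B2 = s2 ` Bn2"
        using subset_image_k[OF inj h(2) X0(1) h(4)] by blast
      ultimately show "gfun k r f m0 B1 = gfun k r f m0 B2" using gB by simp
    qed
    then show ?thesis using m0 unfolding t0_def by blast
  qed
qed
lemma below_eq:
  assumes "F \<subseteq> X" "\<forall>x\<in>X-F. \<forall>y\<in>F. y < x" "(v::nat) \<in> F"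
  shows "{u\<in>X. u < v} = {u\<in>F. u < v}"
proof (intro set_eqI iffI)
  fix u assume u: "u \<in> {u\<in>X. u < v}"
  show "u \<in> {u\<in>F. u < v}"
  proof (rule ccontr)
    assume "u \<notin> {u\<in>F. u < v}"
    then have "u \<in> X - F" using u by auto
    then have "v < u" using assms(2,3) by blast
    then show False using u by simp
  qed
qed (use assms(1) in auto)

lemma pattern_rank:
  assumes l1: "length n1 = k" and l2: "length n2 = k"
    and P: "order_pattern k n1 = order_pattern k (n2::nat list)" and i: "i < k"
  shows "card {u\<in>set n1. u < n1!i} = card {u\<in>set n2. u < n2!i}"
proof -
  have PP: "n1!j < n1!j' \<longleftrightarrow> n2!j < n2!j'" if "j < k" "j' < k" for j j'
  proof -
    have "(j,j') \<in> order_pattern k n1 \<longleftrightarrow> (j,j') \<in> order_pattern k n2" using P by simp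
    then show ?thesis using that unfolding order_pattern_def by simp
  qed
  have PE: "n1!j = n1!j' \<longleftrightarrow> n2!j = n2!j'" if "j < k" "j' < k" for j j'
    using PP[OF that] PP[OF that(2,1)] by (metis less_irrefl linorder_neqE_nat)
  define \<psi> where "\<psi> = (\<lambda>v. n2 ! (SOME j. j < k \<and> n1!j = v))"
  have psi: "\<psi> (n1!j) = n2!j" if j: "j < k" for j
  proof -
    define j' where "j' = (SOME j'. j' < k \<and> n1!j' = n1!j)"
    have "j' < k \<and> n1!j' = n1!j" unfolding j'_def by (rule someI[of _ j]) (use j in simp)
    then have "n2!j' = n2!j" using PE[of j' j] j by simp
    then show ?thesis unfolding \<psi>_def j'_def by simp
  qed
  have bij: "bij_betw \<psi> {u\<in>set n1. u < n1!i} {u\<in>set n2. u < n2!i}"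
    unfolding bij_betw_def
  proof
    show "inj_on \<psi> {u\<in>set n1. u < n1!i}"
    proof (rule inj_onI)
      fix u u' assume "u \<in> {u\<in>set n1. u < n1!i}" "u' \<in> {u\<in>set n1. u < n1!i}" "\<psi> u = \<psi> u'"
      then obtain j j' where "j < k" "j' < k" "u = n1!j" "u' = n1!j'" "\<psi> u = \<psi> u'"
        using l1 by (auto simp: in_set_conv_nth)
      then show "u = u'" using psi PE by metis
    qed
  next
    show "\<psi> ` {u\<in>set n1. u < n1!i} = {u\<in>set n2. u < n2!i}"
    proof (intro set_eqI iffI)
      fix w assume "w \<in> \<psi> ` {u\<in>set n1. u < n1!i}"
      then obtain j where j: "j < k" "n1!j < n1!i" "w = \<psi> (n1!j)"
        using l1 by (auto simp: in_set_conv_nth)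
      then have "w = n2!j" "n2!j < n2!i" using psi PP[OF j(1) i] by auto
      then show "w \<in> {u\<in>set n2. u < n2!i}" using j(1) l2 by auto
    next
      fix w assume "w \<in> {u\<in>set n2. u < n2!i}"
      then obtain j where j: "j < k" "n2!j < n2!i" "w = n2!j"
        using l2 by (auto simp: in_set_conv_nth)
      then have "n1!j < n1!i" using PP[OF j(1) i] by simp
      moreover have "w = \<psi> (n1!j)" using psi j by simp
      ultimately show "w \<in> \<psi> ` {u\<in>set n1. u < n1!i}" using j(1) l1 by auto
    qed
  qed
  show ?thesis using bij_betw_same_card[OF bij] .
qed

definition zr :: "nat list \<Rightarrow> nat list" where
  "zr n = map (\<lambda>v. card {u\<in>set n. u < v}) n"

lemma zr_eq:
  assumes "length n1 = k" "length n2 = k" "order_pattern k n1 = order_pattern k n2"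
  shows "zr n1 = zr n2"
  using pattern_rank[OF assms] assms(1,2) unfolding zr_def by (intro nth_equalityI) auto

lemma gfun_tuple:
  assumes wo: "Well_order r" and k: "k > 0" and sm: "smono r s"
    and ft: "\<forall>x\<in>tuples (Field r) k. f x \<in> tuples (Field r) k"
    and n: "length n = k"
    and reg: "\<forall>b\<in>set (f (map s n)). \<forall>a\<in>set n. rless r b (s a)"
  shows "\<exists>B. finite B \<and> card B = k \<and>
     (\<forall>i<k. (zr n, i) \<in> Mset k \<and> gfun k r f (zr n, i) (s ` B) = f (map s n) ! i)"
proof -
  have fin: "finite (set n)" by simp
  have cs: "card (set n) \<le> k" using n card_length by metis
  obtain B where B: "set n \<subseteq> B" "finite B" "card B = k" "\<forall>x\<in>B-set n. \<forall>y\<in>set n. y < x"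
    using extend_above[OF fin cs] by blast
  have ne: "set n \<noteq> {}" using n k by auto
  have xeq: "map (nthr r (s ` B)) (zr n) = map s n"
  proof -
    have "nthr r (s ` B) (card {u\<in>set n. u < v}) = s v" if v: "v \<in> set n" for v
    proof -
      have "card {u\<in>set n. u < v} = card {u\<in>B. u < v}" using below_eq[OF B(1) B(4) v] by simp
      then show ?thesis using nthr_image[OF wo sm B(2)] v B(1) by auto
    qed
    then show ?thesis unfolding zr_def by simp
  qed
  have zM: "zr n \<in> tuples {0..<k} k"
  proof -
    have "card {u\<in>set n. u < v} < k" if v: "v \<in> set n" for v
    proof -
      have "{u\<in>set n. u < v} \<subset> set n" using v by auto
      then have "card {u\<in>set n. u < v} < card (set n)" using fin by (rule psubset_card_mono[rotated])
      then show ?thesis using cs by simp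
    qed
    then show ?thesis unfolding zr_def tuples_def using n by auto
  qed
  have xt: "map s n \<in> tuples (Field r) k" using n smono_Field[OF sm] unfolding tuples_def by auto
  have cond: "\<forall>b\<in>set (f (map s n)). \<forall>a\<in>s ` B. rless r b a"
  proof (intro ballI)
    fix b a assume b: "b \<in> set (f (map s n))" and a: "a \<in> s ` B"
    then obtain u where u: "u \<in> B" "a = s u" by blast
    show "rless r b a"
    proof (cases "u \<in> set n")
      case True then show ?thesis using reg b u by blast
    next
      case False
      obtain y where y: "y \<in> set n" using ne ex_in_conv by metis
      then have "y < u" using B(4) u False by blast
      then have "rless r (s y) (s u)" using sm unfolding smono_def by blast
      moreover have "rless r b (s y)" using reg b y by blast
      ultimately show ?thesis using rless_trans[OF wo] u by blast
    qed
  qed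
  have "gfun k r f (zr n, i) (s ` B) = f (map s n) ! i" for i
    unfolding gfun_def Let_def using xeq xt cond by simp
  then show ?thesis using B zM unfolding Mset_def by auto
qed

lemma core:
  assumes wo: "Well_order r" and k: "k > 0" and sm: "smono r s"
    and ft: "\<forall>x\<in>tuples (Field r) k. f x \<in> tuples (Field r) k"
    and hom: "\<forall>m\<in>Mset k. \<forall>B B'. finite B \<longrightarrow> card B = k \<longrightarrow> finite B' \<longrightarrow> card B' = k \<longrightarrow>
                 gfun k r f m (s ` B) = gfun k r f m (s ` B')"
    and n1: "length n1 = k" and n2: "length n2 = k"
    and P: "order_pattern k n1 = order_pattern k n2"
    and reg1: "\<forall>b\<in>set (f (map s n1)). \<forall>a\<in>set n1. rless r b (s a)"
    and reg2: "\<forall>b\<in>set (f (map s n2)). \<forall>a\<in>set n2. rless r b (s a)"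
  shows "f (map s n1) = f (map s n2)"
proof -
  obtain B1 where B1: "finite B1" "card B1 = k"
     "\<forall>i<k. (zr n1, i) \<in> Mset k \<and> gfun k r f (zr n1, i) (s ` B1) = f (map s n1) ! i"
    using gfun_tuple[OF wo k sm ft n1 reg1] by blast
  obtain B2 where B2: "finite B2" "card B2 = k"
     "\<forall>i<k. (zr n2, i) \<in> Mset k \<and> gfun k r f (zr n2, i) (s ` B2) = f (map s n2) ! i"
    using gfun_tuple[OF wo k sm ft n2 reg2] by blast
  have z: "zr n1 = zr n2" using zr_eq[OF n1 n2 P] .
  have "map s n1 \<in> tuples (Field r) k" "map s n2 \<in> tuples (Field r) k"
    using n1 n2 smono_Field[OF sm] unfolding tuples_def by auto
  then have "f (map s n1) \<in> tuples (Field r) k" "f (map s n2) \<in> tuples (Field r) k"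
    using ft by blast+
  then have l1: "length (f (map s n1)) = k" and l2: "length (f (map s n2)) = k"
    unfolding tuples_def by auto
  show ?thesis
  proof (rule nth_equalityI)
    show "length (f (map s n1)) = length (f (map s n2))" using l1 l2 by simp
  next
    fix i assume "i < length (f (map s n1))"
    then have i: "i < k" using l1 by simp
    have "f (map s n1) ! i = gfun k r f (zr n1, i) (s ` B1)" using B1(3) i by simp
    also have "\<dots> = gfun k r f (zr n1, i) (s ` B2)" using hom B1(1,2) B2(1,2) B1(3) i by blast
    also have "\<dots> = f (map s n2) ! i" using B2(3) i z by simp
    finally show "f (map s n1) ! i = f (map s n2) ! i" .
  qed
qed
lemma lift_tuple:
  assumes "x' \<in> tuples (\<psi> ` D) k"
  shows "\<exists>n\<in>tuples D k. x' = map \<psi> n"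
proof -
  define n where "n = map (\<lambda>y. SOME d. d \<in> D \<and> y = \<psi> d) x'"
  have h: "(SOME d. d \<in> D \<and> y = \<psi> d) \<in> D \<and> y = \<psi> (SOME d. d \<in> D \<and> y = \<psi> d)" if "y \<in> set x'" for y
  proof -
    have "\<exists>d. d \<in> D \<and> y = \<psi> d" using assms that unfolding tuples_def by auto
    then show ?thesis by (rule someI_ex)
  qed
  have "map \<psi> n = x'" unfolding n_def using h by (induction x') auto
  moreover have "n \<in> tuples D k" using assms h unfolding n_def tuples_def by auto
  ultimately show ?thesis by auto
qed

lemma final_transfer:
  assumes wo: "Well_order r" and k: "k > 0" and sm: "smono r s"
    and comp: "completion k U (Field r) r f"
    and hom: "\<forall>m\<in>Mset k. \<forall>B B'. finite B \<longrightarrow> card B = k \<longrightarrow> finite B' \<longrightarrow> card B' = k \<longrightarrow>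
                 gfun k r f m (s ` B) = gfun k r f m (s ` B')"
  shows "\<exists>A E. finite A \<and> A \<subseteq> tuples UNIV k \<and> finite E \<and> card E = p \<and>
               tuples E k \<subseteq> A \<and> card (regvals (U A) (tuples E k)) \<le> ot k"
proof -
  have ft: "\<forall>x\<in>tuples (Field r) k. f x \<in> tuples (Field r) k" using comp unfolding completion_def by blast
  define E0 where "E0 = s ` {0..<p}"
  define Bt where "Bt = tuples E0 k"
  have E0F: "E0 \<subseteq> Field r" unfolding E0_def using smono_Field[OF sm] by auto
  have finBt: "finite Bt"
  proof -
    have "Bt = {xs. set xs \<subseteq> E0 \<and> length xs = k}" unfolding Bt_def tuples_def by auto
    then show ?thesis using finite_lists_length_eq[of E0 k] unfolding E0_def by simp
  qed
  have BtF: "Bt \<subseteq> tuples (Field r) k" using E0F unfolding Bt_def tuples_def by auto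
  obtain C A where CA: "finite C" "Bt \<subseteq> C" "C \<subseteq> tuples (Field r) k" "finite A"
      "A \<subseteq> tuples UNIV k" "order_iso r C f A (U A)"
  proof -
    have "\<forall>B. finite B \<and> B \<subseteq> tuples (Field r) k \<longrightarrow>
        (\<exists>C A. finite C \<and> B \<subseteq> C \<and> C \<subseteq> tuples (Field r) k \<and>
               finite A \<and> A \<subseteq> tuples UNIV k \<and> order_iso r C f A (U A))"
      using comp unfolding completion_def by (rule conjunct2)
    then have "\<exists>C A. finite C \<and> Bt \<subseteq> C \<and> C \<subseteq> tuples (Field r) k \<and>
               finite A \<and> A \<subseteq> tuples UNIV k \<and> order_iso r C f A (U A)"
      using finBt BtF by blast
    then show ?thesis using that by blast
  qed
  define G where "G = graph_on C f"
  define G' where "G' = graph_on A (U A)"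
  obtain \<phi> where phi: "bij_betw \<phi> (fld G) (fld G')"
     "\<forall>a\<in>fld G. \<forall>b\<in>fld G. ((a, b) \<in> r \<and> a \<noteq> b) \<longleftrightarrow> \<phi> a < \<phi> b"
     "(\<lambda>(x, y). (map \<phi> x, map \<phi> y)) ` G = G'"
    using CA(6) unfolding order_iso_def G_def G'_def by blast
  have fldC: "set x \<subseteq> fld G \<and> set (f x) \<subseteq> fld G" if "x \<in> C" for x
    using that unfolding fld_def G_def graph_on_def by blast
  have UA: "map \<phi> x \<in> A \<and> U A (map \<phi> x) = map \<phi> (f x)" if "x \<in> C" for x
  proof -
    have "(x, f x) \<in> G" using that unfolding G_def graph_on_def by blast
    then have "(map \<phi> x, map \<phi> (f x)) \<in> G'" using phi(3) by force
    then show ?thesis unfolding G'_def graph_on_def by auto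
  qed
  have ordr: "rless r a b \<longleftrightarrow> \<phi> a < \<phi> b" if "a \<in> fld G" "b \<in> fld G" for a b
    using phi(2) that unfolding rless_def by blast
  have sG: "s a \<in> fld G" if "a < p" for a
  proof -
    have "replicate k (s a) \<in> Bt" using that unfolding Bt_def E0_def tuples_def by auto
    then have "set (replicate k (s a)) \<subseteq> fld G" using fldC CA(2) by blast
    then show ?thesis using k by simp
  qed
  define \<psi> where "\<psi> = \<phi> \<circ> s"
  have psi_less: "\<psi> a < \<psi> b \<longleftrightarrow> a < b" if "a < p" "b < p" for a b
    using ordr[OF sG[OF that(1)] sG[OF that(2)]] smono_iff[OF wo sm] unfolding \<psi>_def by simp
  have injpsi: "inj_on \<psi> {0..<p}"
  proof (rule inj_onI)
    fix a b assume "a \<in> {0..<p}" "b \<in> {0..<p}" "\<psi> a = \<psi> b"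
    then show "a = b" using psi_less by (metis atLeastLessThan_iff linorder_neqE_nat less_irrefl)
  qed
  define E where "E = \<psi> ` {0..<p}"
  have cardE: "card E = p" unfolding E_def using card_image[OF injpsi] by simp
  have nC: "map s n \<in> C" if "n \<in> tuples {0..<p} k" for n
  proof -
    have "map s n \<in> Bt" using that unfolding Bt_def E0_def tuples_def by auto
    then show ?thesis using CA(2) by blast
  qed
  have tE: "tuples E k \<subseteq> A"
  proof
    fix x' assume "x' \<in> tuples E k"
    then obtain n where n: "n \<in> tuples {0..<p} k" "x' = map \<psi> n" using lift_tuple unfolding E_def by blast
    then have "x' = map \<phi> (map s n)" unfolding \<psi>_def by simp
    then show "x' \<in> A" using UA[OF nC[OF n(1)]] by simp
  qed
  have regeq: "Max (set (U A (map \<psi> n))) < Min (set (map \<psi> n)) \<longleftrightarrow>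
      (\<forall>b\<in>set (f (map s n)). \<forall>a\<in>set n. rless r b (s a))" if n: "n \<in> tuples {0..<p} k" for n
  proof -
    have xC: "map s n \<in> C" using nC[OF n] .
    have U: "U A (map \<psi> n) = map \<phi> (f (map s n))" using UA[OF xC] unfolding \<psi>_def by simp
    have ln: "length n = k" using n unfolding tuples_def by simp
    have lf: "length (f (map s n)) = k" using ft CA(3) xC unfolding tuples_def by blast
    have ne1: "set (map \<phi> (f (map s n))) \<noteq> {}" using lf k by auto
    have ne2: "set (map \<psi> n) \<noteq> {}" using ln k by auto
    have "Max (set (U A (map \<psi> n))) < Min (set (map \<psi> n)) \<longleftrightarrow>
          (\<forall>b\<in>set (f (map s n)). \<forall>a\<in>set n. \<phi> b < \<psi> a)"
      unfolding U using Max_less_iff[OF _ ne1] Min_gr_iff[OF _ ne2] by auto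
    also have "\<dots> \<longleftrightarrow> (\<forall>b\<in>set (f (map s n)). \<forall>a\<in>set n. rless r b (s a))"
    proof -
      have "b \<in> fld G" if "b \<in> set (f (map s n))" for b using fldC[OF xC] that by blast
      moreover have "s a \<in> fld G" if "a \<in> set n" for a using sG n that unfolding tuples_def by auto
      ultimately show ?thesis using ordr unfolding \<psi>_def by auto
    qed
    finally show ?thesis .
  qed
  have pateq: "order_pattern k (map \<psi> n) = order_pattern k n" if n: "n \<in> tuples {0..<p} k" for n
  proof -
    have "\<forall>i<k. n!i < p"
    proof (intro allI impI)
      fix i assume "i < k"
      then have "n!i \<in> set n" using n unfolding tuples_def by simp
      then show "n!i < p" using n unfolding tuples_def by auto
    qed
    then show ?thesis using n psi_less unfolding order_pattern_def tuples_def by auto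
  qed
  define Pats where "Pats = order_pattern k ` tuples (UNIV::nat set) k"
  have finP: "finite Pats"
  proof -
    have "Pats \<subseteq> Pow ({0..<k} \<times> {0..<k})" unfolding Pats_def order_pattern_def by auto
    then show ?thesis by (rule finite_subset) simp
  qed
  define RV where "RV = (\<lambda>x' y. x' \<in> tuples E k \<and> y = U A x' \<and> Max (set y) < Min (set x'))"
  define Gp where "Gp = (\<lambda>P. SOME y. \<exists>x'. RV x' y \<and> order_pattern k x' = P)"
  have uniq: "y1 = y2" if R1: "RV x1 y1" and R2: "RV x2 y2" and R3: "order_pattern k x1 = order_pattern k x2" for x1 x2 y1 y2
  proof -
    obtain n1 where n1: "n1 \<in> tuples {0..<p} k" "x1 = map \<psi> n1"
      using R1 lift_tuple unfolding RV_def E_def by blast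
    obtain n2 where n2: "n2 \<in> tuples {0..<p} k" "x2 = map \<psi> n2"
      using R2 lift_tuple unfolding RV_def E_def by blast
    have r1: "\<forall>b\<in>set (f (map s n1)). \<forall>a\<in>set n1. rless r b (s a)"
    proof -
      have "Max (set (U A (map \<psi> n1))) < Min (set (map \<psi> n1))"
        using R1 n1(2) unfolding RV_def by blast
      then show ?thesis using regeq[OF n1(1)] by blast
    qed
    have r2: "\<forall>b\<in>set (f (map s n2)). \<forall>a\<in>set n2. rless r b (s a)"
    proof -
      have "Max (set (U A (map \<psi> n2))) < Min (set (map \<psi> n2))"
        using R2 n2(2) unfolding RV_def by blast
      then show ?thesis using regeq[OF n2(1)] by blast
    qed
    have P: "order_pattern k n1 = order_pattern k n2"
      using R3 pateq[OF n1(1)] pateq[OF n2(1)] n1(2) n2(2) by simp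
    have l: "length n1 = k" "length n2 = k" using n1 n2 unfolding tuples_def by auto
    have "f (map s n1) = f (map s n2)"
      using core[OF wo k sm ft hom l P r1 r2] .
    moreover have "y1 = map \<phi> (f (map s n1))" "y2 = map \<phi> (f (map s n2))"
      using R1 R2 UA[OF nC[OF n1(1)]] UA[OF nC[OF n2(1)]] n1(2) n2(2)
      unfolding RV_def \<psi>_def by auto
    ultimately show ?thesis by simp
  qed
  have sub: "regvals (U A) (tuples E k) \<subseteq> Gp ` Pats"
  proof
    fix y assume "y \<in> regvals (U A) (tuples E k)"
    then obtain x' where x': "RV x' y" unfolding regvals_def RV_def by blast
    define P where "P = order_pattern k x'"
    have "P \<in> Pats" unfolding P_def Pats_def using x' unfolding RV_def tuples_def by auto
    moreover have "Gp P = y"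
    proof -
      have "\<exists>y x'. RV x' y \<and> order_pattern k x' = P" using x' P_def by blast
      then have "\<exists>x''. RV x'' (Gp P) \<and> order_pattern k x'' = P"
        unfolding Gp_def by (rule someI2_ex) blast
      then obtain x'' where "RV x'' (Gp P)" "order_pattern k x'' = P" by blast
      then show ?thesis using uniq[OF x'] P_def by metis
    qed
    ultimately show "y \<in> Gp ` Pats" by blast
  qed
  have "card (regvals (U A) (tuples E k)) \<le> card (Gp ` Pats)"
    using sub finP by (simp add: card_mono)
  also have "\<dots> \<le> card Pats" using finP by (rule card_image_le)
  also have "\<dots> = ot k" unfolding Pats_def ot_def by simp
  finally have "card (regvals (U A) (tuples E k)) \<le> ot k" .
  moreover have "finite E" unfolding E_def by simp
  ultimately show ?thesis using CA(4,5) cardE tE by blast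
qed
theorem theorem4p11:
  fixes U :: "nat list set \<Rightarrow> nat list \<Rightarrow> nat list" and k p :: nat
  assumes "\<forall>j>0. \<exists>r :: 'a rel. ineffable' j r"
    and "k > 0" and "p > 0"
    and "function_assignment k U"
    and "ordinal_completion_property TYPE('a) k U"
  shows "\<exists>A E. finite A \<and> A \<subseteq> tuples UNIV k \<and> finite E \<and> card E = p \<and>
               tuples E k \<subseteq> A \<and> card (regvals (U A) (tuples E k)) \<le> ot k"
proof -
  have k: "k > 0" using assms(2) .
  have L: "2*k > 0" using k by simp
  obtain r :: "'a rel" where ine: "ineffable' (2*k) r" using assms(1) L by blast
  have co: "card_order_on (Field r) r" and inf: "infinite (Field r)"
    and hm: "\<forall>f. regressive (2*k) r f \<longrightarrow> (\<exists>S. stationary r S \<and> (\<exists>c. \<forall>A\<in>Sk (2*k) S. f A = c))"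
    using ine unfolding ineffable'_def by blast+
  have wo: "Well_order r" using co by (simp add: card_order_on_well_order_on)
  obtain f where comp: "completion k U (Field r) r f"
    using assms(5) wo unfolding ordinal_completion_property_def by blast
  have ft: "\<forall>x\<in>tuples (Field r) k. f x \<in> tuples (Field r) k" using comp unfolding completion_def by blast
  obtain S c where S: "stationary r S" and Sc: "\<forall>A\<in>Sk (2*k) S. Hfun k r f A = c"
    using hm Hfun_regressive[OF wo ft L] by blast
  obtain s where s: "smono r s" "range s \<subseteq> S" using stationary_seq[OF co inf S] by blast
  have FV: "\<forall>A. {m\<in>Mset k. \<not> chi k r f m A} \<in> Pow (Mset k)" by blast
  obtain s2 where s2: "smono r s2" "range s2 \<subseteq> S"
    "\<forall>X X'. finite X \<longrightarrow> card X = 2*k \<longrightarrow> finite X' \<longrightarrow> card X' = 2*k \<longrightarrow>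
       {m\<in>Mset k. \<not> chi k r f m (s2 ` X)} = {m\<in>Mset k. \<not> chi k r f m (s2 ` X')}"
    using ramsey_seq[OF wo s(1) s(2) _ FV, of "2*k"] finite_Mset by blast
  have inj: "inj s2" using smono_inj[OF wo s2(1)] .
  have Hc: "\<forall>X. finite X \<longrightarrow> card X = 2*k \<longrightarrow> Hfun k r f (s2 ` X) = c"
  proof (intro allI impI)
    fix X :: "nat set" assume X: "finite X" "card X = 2*k"
    have "s2 ` X \<in> Sk (2*k) S"
      using X s2(2) card_image[OF inj_on_subset[OF inj, of X]] unfolding Sk_def by auto
    then show "Hfun k r f (s2 ` X) = c" using Sc by blast
  qed
  have hom: "\<forall>m\<in>Mset k. \<forall>B B'. finite B \<longrightarrow> card B = k \<longrightarrow> finite B' \<longrightarrow> card B' = k \<longrightarrow>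
                 gfun k r f m (s2 ` B) = gfun k r f m (s2 ` B')"
    using homog[OF wo k s2(1) Hc s2(3)] by blast
  show ?thesis using final_transfer[OF wo k s2(1) comp hom] .
qed

end
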